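(* Let $x,y\in V(D^+)$ with $y\prec x$ and $y\in F$. Then $g(x,u)>g^*(y)$ for every $u\prec y$.
   Context: $G=(V,E,w)$ is a simple, connected, undirected graph with positive edge lengths, $s,t\in V$, $d(\cdot,\cdot)$ the shortest path distance in $G$. $D$ is the union of all shortest $st$-paths of $G$, and $D^+$ is the directed acyclic graph obtained from $D$ by orienting every edge toward $t$. $x\prec y$ means $x$ is an ancestor of $y$ in $D^+$ (a directed path of positive length from $x$ to $y$ exists). For $x\neq s$, $v\neq x$ is an $s$-dominator of $x$ if every directed path from $s$ to $x$ in $D^+$ contains $v$, and $I_s(x)$ is the $s$-dominator of $x$ closest to $x$ (every other $s$-dominator of $x$ is an $s$-dominator of $I_s(x)$). Symmetrically, for $x\neq t$, $v\neq x$ is a $t$-dominator of $x$ if every directed path from $x$ to $t$ in $D^+$ contains $v$, and $I_t(x)$ is the $t$-dominator closest to $x$. For $x\neq s$, $C(x)=\{v: I_s(x)\prec v\prec x\}$. For $x\neq s$ and $y\in V(D^+)$, $g(x,y)=d(y,x)$ if $y\in C(x)$ and $x\prec I_t(y)$, and $g(x,y)=\infty$ otherwise; $g^*(x)=\min_y g(x,y)$. $F=\{x\in V(D^+)\setminus\{s\}: g^*(x)\neq\infty\}$. *)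

theory Defs
  imports "HOL-Analysis.Analysis"
begin

definition simple_graph :: "'a set \<Rightarrow> 'a set set \<Rightarrow> bool" where
  "simple_graph V E \<longleftrightarrow> finite V \<and> (\<forall>e\<in>E. e \<subseteq> V \<and> card e = 2)"

definition walk :: "'a set \<Rightarrow> 'a set set \<Rightarrow> 'a list \<Rightarrow> bool" where
  "walk V E p \<longleftrightarrow> p \<noteq> [] \<and> set p \<subseteq> V \<and>
     (\<forall>i < length p - 1. {p ! i, p ! Suc i} \<in> E)"

definition walk_len :: "('a set \<Rightarrow> real) \<Rightarrow> 'a list \<Rightarrow> real" where
  "walk_len w p = (\<Sum>i < length p - 1. w {p ! i, p ! Suc i})"

definition connected_graph :: "'a set \<Rightarrow> 'a set set \<Rightarrow> bool" where
  "connected_graph V E \<longleftrightarrow> (\<forall>u\<in>V. \<forall>v\<in>V. \<exists>p. walk V E p \<and> hd p = u \<and> last p = v)"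

definition dist_G :: "'a set \<Rightarrow> 'a set set \<Rightarrow> ('a set \<Rightarrow> real) \<Rightarrow> 'a \<Rightarrow> 'a \<Rightarrow> real" where
  "dist_G V E w x y = Inf {walk_len w p | p. walk V E p \<and> hd p = x \<and> last p = y}"

definition shortest_path :: "'a set \<Rightarrow> 'a set set \<Rightarrow> ('a set \<Rightarrow> real) \<Rightarrow> 'a \<Rightarrow> 'a \<Rightarrow> 'a list \<Rightarrow> bool" where
  "shortest_path V E w s t p \<longleftrightarrow> walk V E p \<and> distinct p \<and> hd p = s \<and> last p = t \<and>
     walk_len w p = dist_G V E w s t"

definition DV :: "'a set \<Rightarrow> 'a set set \<Rightarrow> ('a set \<Rightarrow> real) \<Rightarrow> 'a \<Rightarrow> 'a \<Rightarrow> 'a set" where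
  "DV V E w s t = \<Union> {set p | p. shortest_path V E w s t p}"

definition Darcs :: "'a set \<Rightarrow> 'a set set \<Rightarrow> ('a set \<Rightarrow> real) \<Rightarrow> 'a \<Rightarrow> 'a \<Rightarrow> ('a \<times> 'a) set" where
  "Darcs V E w s t = {(p ! i, p ! Suc i) | p i. shortest_path V E w s t p \<and> i < length p - 1}"

definition prec :: "'a set \<Rightarrow> 'a set set \<Rightarrow> ('a set \<Rightarrow> real) \<Rightarrow> 'a \<Rightarrow> 'a \<Rightarrow> 'a \<Rightarrow> 'a \<Rightarrow> bool" where
  "prec V E w s t x y \<longleftrightarrow> (x, y) \<in> (Darcs V E w s t)\<^sup>+"

definition dpath :: "'a set \<Rightarrow> 'a set set \<Rightarrow> ('a set \<Rightarrow> real) \<Rightarrow> 'a \<Rightarrow> 'a \<Rightarrow> 'a list \<Rightarrow> 'a \<Rightarrow> 'a \<Rightarrow> bool" where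
  "dpath V E w s t q a b \<longleftrightarrow> q \<noteq> [] \<and> hd q = a \<and> last q = b \<and>
     (\<forall>i < length q - 1. (q ! i, q ! Suc i) \<in> Darcs V E w s t)"

definition sdom :: "'a set \<Rightarrow> 'a set set \<Rightarrow> ('a set \<Rightarrow> real) \<Rightarrow> 'a \<Rightarrow> 'a \<Rightarrow> 'a \<Rightarrow> 'a \<Rightarrow> bool" where
  "sdom V E w s t v x \<longleftrightarrow> v \<noteq> x \<and> (\<forall>q. dpath V E w s t q s x \<longrightarrow> v \<in> set q)"

definition tdom :: "'a set \<Rightarrow> 'a set set \<Rightarrow> ('a set \<Rightarrow> real) \<Rightarrow> 'a \<Rightarrow> 'a \<Rightarrow> 'a \<Rightarrow> 'a \<Rightarrow> bool" where
  "tdom V E w s t v x \<longleftrightarrow> v \<noteq> x \<and> (\<forall>q. dpath V E w s t q x t \<longrightarrow> v \<in> set q)"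

definition Is :: "'a set \<Rightarrow> 'a set set \<Rightarrow> ('a set \<Rightarrow> real) \<Rightarrow> 'a \<Rightarrow> 'a \<Rightarrow> 'a \<Rightarrow> 'a" where
  "Is V E w s t x = (THE v. sdom V E w s t v x \<and>
      (\<forall>u. sdom V E w s t u x \<and> u \<noteq> v \<longrightarrow> sdom V E w s t u v))"

definition It :: "'a set \<Rightarrow> 'a set set \<Rightarrow> ('a set \<Rightarrow> real) \<Rightarrow> 'a \<Rightarrow> 'a \<Rightarrow> 'a \<Rightarrow> 'a" where
  "It V E w s t x = (THE v. tdom V E w s t v x \<and>
      (\<forall>u. tdom V E w s t u x \<and> u \<noteq> v \<longrightarrow> tdom V E w s t u v))"

definition Cset :: "'a set \<Rightarrow> 'a set set \<Rightarrow> ('a set \<Rightarrow> real) \<Rightarrow> 'a \<Rightarrow> 'a \<Rightarrow> 'a \<Rightarrow> 'a set" where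
  "Cset V E w s t x = {v. prec V E w s t (Is V E w s t x) v \<and> prec V E w s t v x}"

definition gfun :: "'a set \<Rightarrow> 'a set set \<Rightarrow> ('a set \<Rightarrow> real) \<Rightarrow> 'a \<Rightarrow> 'a \<Rightarrow> 'a \<Rightarrow> 'a \<Rightarrow> ereal" where
  "gfun V E w s t x y =
     (if y \<in> Cset V E w s t x \<and> prec V E w s t x (It V E w s t y)
      then ereal (dist_G V E w y x) else \<infinity>)"

definition gstar :: "'a set \<Rightarrow> 'a set set \<Rightarrow> ('a set \<Rightarrow> real) \<Rightarrow> 'a \<Rightarrow> 'a \<Rightarrow> 'a \<Rightarrow> ereal" where
  "gstar V E w s t x = (INF y\<in>DV V E w s t. gfun V E w s t x y)"

definition Fset :: "'a set \<Rightarrow> 'a set set \<Rightarrow> ('a set \<Rightarrow> real) \<Rightarrow> 'a \<Rightarrow> 'a \<Rightarrow> 'a set" where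
  "Fset V E w s t = {x \<in> DV V E w s t - {s}. gstar V E w s t x \<noteq> \<infinity>}"

end

theory Submission
  imports Defs
begin

lemma in_tl: "x \<in> set (tl r) \<Longrightarrow> x \<in> set r"
  by (cases r) auto

lemma walk_len_single[simp]: "walk_len w [a] = 0"
  by (simp add: walk_len_def)

lemma walk_len_Cons:
  assumes "p \<noteq> []" shows "walk_len w (a # p) = w {a, hd p} + walk_len w p"
proof -
  obtain n where n: "length p = Suc n" using assms by (cases p) auto
  have "walk_len w (a # p) = (\<Sum>i<Suc n. w {(a#p) ! i, (a#p) ! Suc i})"
    by (simp add: walk_len_def n)
  also have "\<dots> = w {a, p ! 0} + (\<Sum>i<n. w {p ! i, p ! Suc i})"
    unfolding sum.lessThan_Suc_shift by simp
  also have "\<dots> = w {a, hd p} + walk_len w p"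
    using assms by (simp add: walk_len_def n hd_conv_nth)
  finally show ?thesis .
qed

lemma walk_Cons:
  assumes "p \<noteq> []"
  shows "walk V E (a # p) \<longleftrightarrow> a \<in> V \<and> {a, hd p} \<in> E \<and> walk V E p"
proof -
  obtain n where n: "length p = Suc n" using assms by (cases p) auto
  have "(\<forall>i<Suc n. {(a#p) ! i, (a#p) ! Suc i} \<in> E) \<longleftrightarrow>
        {a, p ! 0} \<in> E \<and> (\<forall>i<n. {p ! i, p ! Suc i} \<in> E)"
    unfolding All_less_Suc2 by simp
  then show ?thesis using assms
    by (auto simp: walk_def n hd_conv_nth)
qed

lemma walk_single[simp]: "walk V E [a] \<longleftrightarrow> a \<in> V"
  by (simp add: walk_def)

lemma walk_append:
  assumes "walk V E p" "walk V E q" "last p = hd q"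
  shows "walk V E (p @ tl q) \<and> walk_len w (p @ tl q) = walk_len w p + walk_len w q
     \<and> hd (p @ tl q) = hd p \<and> last (p @ tl q) = last q"
  using assms
proof (induction p)
  case Nil
  then show ?case by (simp add: walk_def)
next
  case (Cons a p)
  have qne: "q \<noteq> []" using Cons.prems by (simp add: walk_def)
  show ?case
  proof (cases "p = []")
    case True
    then have "[a] @ tl q = q" using Cons.prems qne by (cases q) auto
    then show ?thesis using True Cons.prems by simp
  next
    case False
    have wp: "walk V E p" and a: "a \<in> V" "{a, hd p} \<in> E"
      using walk_Cons[OF False, of V E a] Cons.prems(1) by simp_all
    have IH: "walk V E (p @ tl q) \<and> walk_len w (p @ tl q) = walk_len w p + walk_len w q
     \<and> hd (p @ tl q) = hd p \<and> last (p @ tl q) = last q"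
      using Cons.IH wp Cons.prems False by simp
    have ne: "p @ tl q \<noteq> []" using False by simp
    have hd: "hd (p @ tl q) = hd p" using False by simp
    have eq: "(a # p) @ tl q = a # (p @ tl q)" by simp
    have w1: "walk V E (a # (p @ tl q))"
      using walk_Cons[OF ne, of V E a] IH a hd by simp
    have l1: "walk_len w (a # (p @ tl q)) = w {a, hd p} + walk_len w (p @ tl q)"
      using walk_len_Cons[OF ne, of w a] hd by simp
    have l2: "walk_len w (a # p) = w {a, hd p} + walk_len w p"
      using walk_len_Cons[OF False] by simp
    have l3: "last (a # (p @ tl q)) = last (p @ tl q)" using ne by (simp only: last.simps) simp
    show ?thesis unfolding eq using w1 l1 l2 l3 IH by simp
  qed
qed

lemma walk_take: "walk V E p \<Longrightarrow> 0 < n \<Longrightarrow> walk V E (take n p)"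
  unfolding walk_def using set_take_subset[of n p] by auto

lemma walk_drop: "walk V E p \<Longrightarrow> n < length p \<Longrightarrow> walk V E (drop n p)"
  unfolding walk_def using set_drop_subset[of n p] by auto

lemma walk_len_take:
  assumes "i < length p"
  shows "walk_len w (take (Suc i) p) = (\<Sum>j<i. w {p ! j, p ! Suc j})"
  unfolding walk_len_def using assms by (intro sum.cong) auto

lemma dpath_single[simp]: "dpath V E w s t [a] b c \<longleftrightarrow> a = b \<and> a = c"
  by (auto simp: dpath_def)

lemma dpath_Cons:
  assumes "q \<noteq> []"
  shows "dpath V E w s t (v # q) a b \<longleftrightarrow> v = a \<and> (v, hd q) \<in> Darcs V E w s t \<and> dpath V E w s t q (hd q) b"
proof -
  obtain n where n: "length q = Suc n" using assms by (cases q) auto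
  have "(\<forall>i<Suc n. ((v#q) ! i, (v#q) ! Suc i) \<in> Darcs V E w s t) \<longleftrightarrow>
        (v, q ! 0) \<in> Darcs V E w s t \<and> (\<forall>i<n. (q ! i, q ! Suc i) \<in> Darcs V E w s t)"
    unfolding All_less_Suc2 by simp
  then show ?thesis using assms
    by (auto simp: dpath_def n hd_conv_nth)
qed

lemma dpath_append:
  assumes "dpath V E w s t q a b" "dpath V E w s t r b c"
  shows "dpath V E w s t (q @ tl r) a c"
  using assms
proof (induction q arbitrary: a)
  case Nil
  then show ?case by (simp add: dpath_def)
next
  case (Cons v q)
  have rne: "r \<noteq> []" using Cons.prems by (simp add: dpath_def)
  show ?case
  proof (cases "q = []")
    case True
    then have "[v] @ tl r = r" "v = b" "v = a" using Cons.prems rne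
      by (auto simp: dpath_def)
    then show ?thesis using Cons.prems True by simp
  next
    case False
    then have h: "v = a" "(v, hd q) \<in> Darcs V E w s t" "dpath V E w s t q (hd q) b"
      using dpath_Cons[OF False, of V E w s t v a b] Cons.prems(1) by auto
    have "dpath V E w s t (q @ tl r) (hd q) c" using Cons.IH h Cons.prems by blast
    then show ?thesis using h False by (simp add: dpath_Cons)
  qed
qed

lemma trancl_dpath:
  assumes "(a, b) \<in> (Darcs V E w s t)\<^sup>+"
  shows "\<exists>q. dpath V E w s t q a b"
  using assms
proof (induction rule: converse_trancl_induct)
  case (base y)
  then show ?case by (intro exI[of _ "[y, b]"]) (simp add: dpath_Cons)
next
  case (step y z)
  then obtain q where q: "dpath V E w s t q z b" by blast
  then have "q \<noteq> []" "hd q = z" by (auto simp: dpath_def)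
  then show ?case using q step by (intro exI[of _ "y # q"]) (simp add: dpath_Cons)
qed

lemma dpath_nth_trancl:
  assumes "dpath V E w s t q a b" "i < j" "j < length q"
  shows "(q ! i, q ! j) \<in> (Darcs V E w s t)\<^sup>+"
  using assms(2,3)
proof (induction j)
  case 0 then show ?case by simp
next
  case (Suc j)
  have arc: "(q ! j, q ! Suc j) \<in> Darcs V E w s t"
    using assms(1) Suc.prems by (auto simp: dpath_def)
  show ?case
  proof (cases "i = j")
    case True then show ?thesis using arc by auto
  next
    case False
    then have "(q ! i, q ! j) \<in> (Darcs V E w s t)\<^sup>+" using Suc by auto
    then show ?thesis using arc by auto
  qed
qed

lemma dpath_mem:
  assumes "dpath V E w s t q a b" "v \<in> set q"
  shows "(v = a \<or> prec V E w s t a v) \<and> (v = b \<or> prec V E w s t v b)"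
proof -
  obtain k where k: "k < length q" "v = q ! k" using assms(2) by (auto simp: in_set_conv_nth)
  have a: "a = q ! 0" and b: "b = q ! (length q - 1)" and ne: "q \<noteq> []"
    using assms(1) by (auto simp: dpath_def hd_conv_nth last_conv_nth)
  have 1: "v = a \<or> prec V E w s t a v"
  proof (cases k)
    case 0 then show ?thesis using k a by simp
  next
    case (Suc k') then show ?thesis using k a dpath_nth_trancl[OF assms(1), of 0 k]
      by (auto simp: prec_def)
  qed
  have 2: "v = b \<or> prec V E w s t v b"
  proof (cases "k = length q - 1")
    case True then show ?thesis using k b by simp
  next
    case False then show ?thesis using k b dpath_nth_trancl[OF assms(1), of k "length q - 1"]
      by (auto simp: prec_def)
  qed
  show ?thesis using 1 2 by blast
qed

locale G =
  fixes V :: "'a set" and E :: "'a set set" and w :: "'a set \<Rightarrow> real" and s t :: 'a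
  assumes simple: "simple_graph V E" and conn: "connected_graph V E"
    and pos: "\<forall>e\<in>E. w e > 0"
begin

abbreviation "d \<equiv> dist_G V E w"
abbreviation "ds \<equiv> dist_G V E w s"
abbreviation "D \<equiv> Darcs V E w s t"
abbreviation "pr \<equiv> prec V E w s t"

lemma walk_len_nonneg: "walk V E p \<Longrightarrow> 0 \<le> walk_len w p"
  unfolding walk_len_def walk_def using pos
  by (intro sum_nonneg) (auto intro: less_imp_le)

lemma dist_le:
  assumes "walk V E p" shows "d (hd p) (last p) \<le> walk_len w p"
  unfolding dist_G_def
proof (rule cInf_lower)
  show "walk_len w p \<in> {walk_len w pa |pa. walk V E pa \<and> hd pa = hd p \<and> last pa = last p}"
    using assms by blast
  show "bdd_below {walk_len w pa |pa. walk V E pa \<and> hd pa = hd p \<and> last pa = last p}"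
    by (rule bdd_belowI[of _ 0]) (auto intro: walk_len_nonneg)
qed

lemma dist_ge:
  assumes "x \<in> V" "y \<in> V"
    and "\<And>p. walk V E p \<Longrightarrow> hd p = x \<Longrightarrow> last p = y \<Longrightarrow> c \<le> walk_len w p"
  shows "c \<le> d x y"
  unfolding dist_G_def
proof (rule cInf_greatest)
  obtain p where "walk V E p" "hd p = x" "last p = y"
    using conn assms(1,2) unfolding connected_graph_def by blast
  then show "{walk_len w p |p. walk V E p \<and> hd p = x \<and> last p = y} \<noteq> {}" by blast
qed (use assms(3) in blast)

lemma walk_ends: "walk V E p \<Longrightarrow> hd p \<in> V \<and> last p \<in> V"
  unfolding walk_def by auto

lemma triangle:
  assumes "x \<in> V" "y \<in> V" "z \<in> V"
  shows "d x z \<le> d x y + d y z"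
proof -
  have "d x z - walk_len w q \<le> d x y"
    if q: "walk V E q" "hd q = y" "last q = z" for q
  proof (rule dist_ge[OF assms(1,2)])
    fix p assume p: "walk V E p" "hd p = x" "last p = y"
    have "walk V E (p @ tl q) \<and> walk_len w (p @ tl q) = walk_len w p + walk_len w q
     \<and> hd (p @ tl q) = hd p \<and> last (p @ tl q) = last q"
      using walk_append p q by metis
    then have "d x z \<le> walk_len w p + walk_len w q"
      using dist_le[of "p @ tl q"] p q by simp
    then show "d x z - walk_len w q \<le> walk_len w p" by simp
  qed
  then have "d x z - d x y \<le> d y z"
    by (intro dist_ge[OF assms(2,3)]) (smt (verit))
  then show ?thesis by simp
qed

lemma sp_prefix:
  assumes sp: "shortest_path V E w s t p" and i: "i < length p"
  shows "ds (p ! i) = walk_len w (take (Suc i) p)"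
proof -
  have wp: "walk V E p" and hp: "hd p = s" and lp: "last p = t" and len: "walk_len w p = d s t"
    using sp by (auto simp: shortest_path_def)
  have pne: "p \<noteq> []" using wp by (simp add: walk_def)
  define P where "P = take (Suc i) p"
  define S where "S = drop i p"
  have wP: "walk V E P" unfolding P_def by (rule walk_take[OF wp]) simp
  have wS: "walk V E S" unfolding S_def by (rule walk_drop[OF wp i])
  have hP: "hd P = s" using hp pne by (simp add: P_def hd_take)
  have lP: "last P = p ! i" using i by (simp add: P_def take_Suc_conv_app_nth)
  have hS: "hd S = p ! i" using i by (simp add: S_def hd_drop_conv_nth)
  have lS: "last S = t" using i lp by (simp add: S_def)
  have pPS: "P @ tl S = p" using i
    by (simp add: P_def S_def Cons_nth_drop_Suc[symmetric] take_Suc_conv_app_nth)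
       (metis Cons_nth_drop_Suc append_take_drop_id)
  have sum: "walk_len w p = walk_len w P + walk_len w S"
    using walk_append[OF wP wS] lP hS pPS by metis
  have vV: "p ! i \<in> V" and sV: "s \<in> V" using wp i hp pne unfolding walk_def
    by (auto simp: hd_conv_nth)
  have "ds (p ! i) \<le> walk_len w P" using dist_le[OF wP] hP lP by simp
  moreover have "walk_len w P \<le> ds (p ! i)"
  proof (rule dist_ge[OF sV vV])
    fix q assume q: "walk V E q" "hd q = s" "last q = p ! i"
    have "walk V E (q @ tl S) \<and> walk_len w (q @ tl S) = walk_len w q + walk_len w S
     \<and> hd (q @ tl S) = hd q \<and> last (q @ tl S) = last S"
      using walk_append[OF q(1) wS] q hS by metis
    then have "d s t \<le> walk_len w q + walk_len w S" using dist_le[of "q @ tl S"] q lS by simp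
    then show "walk_len w P \<le> walk_len w q" using sum len by simp
  qed
  ultimately show ?thesis unfolding P_def by simp
qed

lemma arc_props:
  assumes "(a, b) \<in> D"
  shows "{a, b} \<in> E \<and> a \<in> DV V E w s t \<and> b \<in> DV V E w s t \<and> ds b = ds a + w {a, b}"
proof -
  obtain p i where sp: "shortest_path V E w s t p" and i: "i < length p - 1"
    and ab: "a = p ! i" "b = p ! Suc i"
    using assms unfolding Darcs_def by blast
  have wp: "walk V E p" using sp by (simp add: shortest_path_def)
  have E: "{a, b} \<in> E" using wp i ab by (simp add: walk_def)
  have DV: "a \<in> DV V E w s t" "b \<in> DV V E w s t"
    unfolding DV_def using sp i ab by (auto intro!: nth_mem)
  have "ds b = (\<Sum>j<Suc i. w {p ! j, p ! Suc j})"
    using sp_prefix[OF sp, of "Suc i"] walk_len_take[of "Suc i" p] i ab by simp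
  moreover have "ds a = (\<Sum>j<i. w {p ! j, p ! Suc j})"
    using sp_prefix[OF sp, of i] walk_len_take[of i p] i ab by simp
  ultimately have "ds b = ds a + w {a, b}" using ab by simp
  then show ?thesis using E DV by blast
qed

lemma DV_V: "v \<in> DV V E w s t \<Longrightarrow> v \<in> V"
  unfolding DV_def shortest_path_def walk_def by auto

lemma prec_props:
  assumes "pr a b"
  shows "a \<in> DV V E w s t \<and> b \<in> DV V E w s t \<and> ds a < ds b \<and> d a b \<le> ds b - ds a"
  using assms unfolding prec_def
proof (induction rule: trancl_induct)
  case (base b)
  have h: "{a, b} \<in> E" "a \<in> DV V E w s t" "b \<in> DV V E w s t" "ds b = ds a + w {a, b}"
    using arc_props[OF base] by auto
  have "walk V E [a, b]" using h DV_V by (simp add: walk_Cons)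
  then have "d a b \<le> w {a, b}" using dist_le[of "[a,b]"] by (simp add: walk_len_Cons)
  moreover have "w {a, b} > 0" using pos h by blast
  ultimately show ?case using h by simp
next
  case (step b c)
  have h: "{b, c} \<in> E" "b \<in> DV V E w s t" "c \<in> DV V E w s t" "ds c = ds b + w {b, c}"
    using arc_props[OF step(2)] by auto
  have "walk V E [b, c]" using h DV_V by (simp add: walk_Cons)
  then have "d b c \<le> w {b, c}" using dist_le[of "[b,c]"] by (simp add: walk_len_Cons)
  moreover have "w {b, c} > 0" using pos h by blast
  moreover have "d a c \<le> d a b + d b c" using triangle DV_V step(3) h by blast
  ultimately show ?case using h step(3) by simp
qed

lemma DV_reach:
  assumes "v \<in> DV V E w s t" shows "v = s \<or> pr s v"
proof -
  obtain p where sp: "shortest_path V E w s t p" and v: "v \<in> set p"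
    using assms unfolding DV_def by blast
  obtain k where k: "k < length p" "v = p ! k" using v by (auto simp: in_set_conv_nth)
  have hp: "hd p = s" and pne: "p \<noteq> []" using sp by (auto simp: shortest_path_def walk_def)
  have arcs: "\<forall>i<length p - 1. (p ! i, p ! Suc i) \<in> D"
    using sp unfolding Darcs_def by blast
  have dp: "dpath V E w s t p s t"
    using sp pne hp arcs unfolding dpath_def shortest_path_def by blast
  show ?thesis using dpath_mem[OF dp v] by blast
qed

lemma reach_dpath:
  assumes "v = s \<or> pr s v" shows "\<exists>q. dpath V E w s t q s v"
  using assms trancl_dpath[of s v] unfolding prec_def
  by (metis dpath_single)

lemma sdom_less:
  assumes "sdom V E w s t a b" "b = s \<or> pr s b"
  shows "ds a < ds b"
proof -
  obtain q where q: "dpath V E w s t q s b" using reach_dpath[OF assms(2)] by blast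
  have "a \<in> set q" "a \<noteq> b" using assms(1) q by (auto simp: sdom_def)
  then have "pr a b" using dpath_mem[OF q] by blast
  then show ?thesis using prec_props by blast
qed

lemma Is_sdom:
  assumes y: "y \<in> DV V E w s t" "y \<noteq> s"
  shows "sdom V E w s t (Is V E w s t y) y"
proof -
  define P where "P v \<longleftrightarrow> sdom V E w s t v y \<and>
      (\<forall>u. sdom V E w s t u y \<and> u \<noteq> v \<longrightarrow> sdom V E w s t u v)" for v
  have sy: "pr s y" using DV_reach[OF y(1)] y(2) by blast
  obtain p0 where p0: "dpath V E w s t p0 s y" using trancl_dpath[OF sy[unfolded prec_def]] by blast
  define Dm where "Dm = {v. sdom V E w s t v y}"
  have Dm_sub: "Dm \<subseteq> set p0" using p0 by (auto simp: Dm_def sdom_def)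
  have fin: "finite Dm" using Dm_sub finite_subset by blast
  have sDm: "s \<in> Dm" using y(2) by (auto simp: Dm_def sdom_def dpath_def)
  have reachDm: "v = s \<or> pr s v" if "v \<in> Dm" for v
    using dpath_mem[OF p0] Dm_sub that by blast
  define m where "m = Max (ds ` Dm)"
  have "m \<in> ds ` Dm" unfolding m_def using fin sDm by (intro Max_in) auto
  then obtain v where v: "v \<in> Dm" "ds v = m" by blast
  have vmax: "ds u \<le> ds v" if "u \<in> Dm" for u
    unfolding v(2) m_def using fin that by (intro Max_ge) auto
  have Pv: "P v"
    unfolding P_def
  proof (intro conjI allI impI)
    show "sdom V E w s t v y" using v by (simp add: Dm_def)
    fix u assume u: "sdom V E w s t u y \<and> u \<noteq> v"
    have vy: "v \<noteq> y" using v by (simp add: Dm_def sdom_def)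
    have "v \<in> set p0" using v Dm_sub by blast
    then have "pr v y" using dpath_mem[OF p0] vy by blast
    then obtain r where r: "dpath V E w s t r v y" using trancl_dpath[of v y V E w s t] unfolding prec_def by blast
    show "sdom V E w s t u v"
      unfolding sdom_def
    proof (intro conjI allI impI)
      show "u \<noteq> v" using u by blast
      fix q assume q: "dpath V E w s t q s v"
      have "u \<in> set (q @ tl r)" using dpath_append[OF q r] u by (auto simp: sdom_def)
      then have "u \<in> set q \<or> u \<in> set r" by (auto dest: in_tl)
      moreover have "u \<notin> set r"
      proof
        assume "u \<in> set r"
        then have "pr v u" using dpath_mem[OF r] u by blast
        then have "ds v < ds u" using prec_props by blast
        moreover have "ds u \<le> ds v" using vmax u by (simp add: Dm_def)
        ultimately show False by simp
      qed
      ultimately show "u \<in> set q" by blast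
    qed
  qed
  have uniq: "v' = v" if "P v'" for v'
  proof (rule ccontr)
    assume ne: "v' \<noteq> v"
    have 1: "sdom V E w s t v v'" using that Pv ne unfolding P_def by blast
    have 2: "sdom V E w s t v' v" using that Pv ne unfolding P_def by blast
    have "v \<in> Dm" "v' \<in> Dm" using Pv that by (auto simp: P_def Dm_def)
    then have "ds v < ds v'" "ds v' < ds v"
      using sdom_less[OF 1] sdom_less[OF 2] reachDm by auto
    then show False by simp
  qed
  have "Is V E w s t y = v"
    unfolding Is_def P_def[symmetric] using Pv uniq by (rule the_equality)
  then show ?thesis using Pv by (simp add: P_def)
qed

end

theorem lemma7:
  fixes V :: "'a set" and E :: "'a set set" and w :: "'a set \<Rightarrow> real" and s t x y :: 'a
  assumes "simple_graph V E" and "connected_graph V E"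
    and "\<forall>e\<in>E. w e > 0"
    and "s \<in> V" and "t \<in> V"
    and "x \<in> DV V E w s t" and "y \<in> DV V E w s t"
    and "prec V E w s t y x"
    and "y \<in> Fset V E w s t"
  shows "\<forall>u. prec V E w s t u y \<longrightarrow> gfun V E w s t x u > gstar V E w s t y"
proof (intro allI impI)
  interpret G V E w s t using assms(1-3) by unfold_locales
  fix u assume uy: "prec V E w s t u y"
  have yF: "y \<noteq> s" "gstar V E w s t y \<noteq> \<infinity>" using assms(9) by (auto simp: Fset_def)
  show "gfun V E w s t x u > gstar V E w s t y"
  proof (cases "u \<in> Cset V E w s t x \<and> prec V E w s t x (It V E w s t u)")
    case False
    then have "gfun V E w s t x u = \<infinity>" by (simp add: gfun_def)
    then show ?thesis using yF by (simp add: less_top[symmetric])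
  next
    case True
    then have gx: "gfun V E w s t x u = ereal (d u x)" by (simp add: gfun_def)
    have pu: "u \<in> DV V E w s t" "ds u < ds y" "d u y \<le> ds y - ds u"
      using prec_props[OF uy] by auto
    have py: "ds y < ds x" using prec_props[OF assms(8)] by auto
    have "ds x \<le> ds u + d u x"
      using triangle assms(4) DV_V pu(1) assms(6) by blast
    then have dux: "ds x - ds u \<le> d u x" by simp
    show ?thesis
    proof (cases "u \<in> Cset V E w s t y")
      case True
      have "prec V E w s t y (It V E w s t u)"
        using \<open>u \<in> Cset V E w s t x \<and> prec V E w s t x (It V E w s t u)\<close> assms(8)
        unfolding prec_def by auto
      then have "gfun V E w s t y u = ereal (d u y)" using True by (simp add: gfun_def)
      moreover have "gstar V E w s t y \<le> gfun V E w s t y u"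
        unfolding gstar_def by (rule INF_lower[OF pu(1)])
      ultimately have "gstar V E w s t y \<le> ereal (d u y)" by simp
      moreover have "d u y < d u x" using pu py dux by simp
      ultimately show ?thesis using gx by (simp add: order_le_less_trans)
    next
      case False
      then have nI: "\<not> prec V E w s t (Is V E w s t y) u" using uy by (simp add: Cset_def)
      obtain z where z: "z \<in> DV V E w s t" "gfun V E w s t y z \<noteq> \<infinity>"
      proof (rule ccontr)
        assume "\<not> thesis"
        then have "\<forall>z\<in>DV V E w s t. gfun V E w s t y z = \<infinity>" using that by blast
        then have "gstar V E w s t y = \<infinity>" unfolding gstar_def top_ereal_def[symmetric] by simp
        then show False using yF by simp
      qed
      have c: "z \<in> Cset V E w s t y \<and> prec V E w s t y (It V E w s t z)"
        using z(2) by (rule contrapos_np) (simp add: gfun_def)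
      have zC: "prec V E w s t (Is V E w s t y) z" "prec V E w s t z y"
        using c by (simp_all add: Cset_def)
      have gz: "gfun V E w s t y z = ereal (d z y)" using c by (simp add: gfun_def)
      have "gstar V E w s t y \<le> gfun V E w s t y z"
        unfolding gstar_def by (rule INF_lower[OF z(1)])
      then have gsz: "gstar V E w s t y \<le> ereal (d z y)" using gz by simp
      have Iz: "ds (Is V E w s t y) < ds z" using prec_props[OF zC(1)] by blast
      have zy: "d z y \<le> ds y - ds z" using prec_props[OF zC(2)] by blast
      have sd: "sdom V E w s t (Is V E w s t y) y" using Is_sdom assms(7) yF(1) by blast
      have "u = s \<or> prec V E w s t s u" using DV_reach pu(1) by blast
      then obtain q where q: "dpath V E w s t q s u" using reach_dpath by blast
      obtain r where r: "dpath V E w s t r u y" using trancl_dpath[OF uy[unfolded prec_def]] by blast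
      have "Is V E w s t y \<in> set (q @ tl r)" using sd dpath_append[OF q r] unfolding sdom_def by blast
      then have "Is V E w s t y \<in> set q \<or> Is V E w s t y \<in> set r" by (auto dest: in_tl)
      then have "ds u \<le> ds (Is V E w s t y)"
      proof
        assume "Is V E w s t y \<in> set q"
        then have "Is V E w s t y = u \<or> prec V E w s t (Is V E w s t y) u"
          using dpath_mem[OF q] by blast
        then show ?thesis using nI by simp
      next
        assume "Is V E w s t y \<in> set r"
        then have "Is V E w s t y = u \<or> prec V E w s t u (Is V E w s t y)"
          using dpath_mem[OF r] by blast
        moreover have "prec V E w s t u (Is V E w s t y) \<Longrightarrow> ds u < ds (Is V E w s t y)"
          using prec_props by blast
        ultimately show ?thesis by force
      qed
      then have "d z y < d u x" using Iz zy py dux by simp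
      then show ?thesis using gx gsz by (simp add: order_le_less_trans)
    qed
  qed
qed

end
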